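(* Let $\mathbb{T}=\mathbb{R}/\mathbb{Z}$ with Haar probability measure $\mu$, outer measure $\mu^*$ and inner measure $\mu_*$. There exist subsets $A,B\subset\mathbb{T}$ and a real number $\alpha>0$ such that $A+B$ is Haar measurable and satisfies $0<\mu(A+B)\leq\alpha\,\mu^*(A)$, and yet for all positive integers $m,n$ the set $mB-nB$ is Haar measurable and satisfies $\mu(mB-nB)>\alpha^{m+n}\mu_*(A)$.
   Context: $\mu^*(S)=\inf\{\mu(U):U\supset S\text{ measurable}\}$, $\mu_*(S)=\sup\{\mu(K):K\subset S,\ K\text{ compact}\}$. $mB-nB=\{b_1+\dots+b_m-b_1'-\dots-b_n':b_i,b_j'\in B\}$. *)

theory Defs
  imports "HOL-Analysis.Analysis"
begin

text \<open>The circle group T = R/Z is represented by the fundamental domain [0,1),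
  with group operation addition modulo 1 (via frac). The quotient map R -> T is frac.\<close>

definition torus :: "real set" where
  "torus = {0..<1}"

definition tsum :: "real set \<Rightarrow> real set \<Rightarrow> real set" where
  "tsum A B = {frac (a + b) | a b. a \<in> A \<and> b \<in> B}"

definition tdiffset :: "nat \<Rightarrow> nat \<Rightarrow> real set \<Rightarrow> real set" where
  "tdiffset m n B = {frac ((\<Sum>i<m. b i) - (\<Sum>j<n. c j)) | b c.
       (\<forall>i<m. b i \<in> B) \<and> (\<forall>j<n. c j \<in> B)}"

text \<open>Haar measurable subsets of T: Lebesgue measurable subsets of [0,1)
  (Haar probability measure on T = Lebesgue measure on [0,1)).\<close>
definition haar_measurable :: "real set \<Rightarrow> bool" where
  "haar_measurable S \<longleftrightarrow> S \<subseteq> torus \<and> S \<in> sets lebesgue"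

definition haar :: "real set \<Rightarrow> real" where
  "haar S = measure lebesgue S"

definition torus_compact :: "real set \<Rightarrow> bool" where
  "torus_compact K \<longleftrightarrow> (\<exists>C. compact C \<and> K = frac ` C)"

definition outer_haar :: "real set \<Rightarrow> real" where
  "outer_haar S = Inf {haar U | U. haar_measurable U \<and> S \<subseteq> U}"

definition inner_haar :: "real set \<Rightarrow> real" where
  "inner_haar S = Sup {haar K | K. K \<subseteq> S \<and> torus_compact K}"

end

theory Submission
  imports Defs
begin

definition vrep :: "real \<Rightarrow> real" where
  "vrep x = (SOME y. y \<in> {0..<1} \<and> x - y \<in> \<rat>)"

definition vit :: "real set" where
  "vit = range vrep"

lemma vrep_prop: "vrep x \<in> {0..<1} \<and> x - vrep x \<in> \<rat>"
proof -
  have "frac x \<in> {0..<1}" by (simp add: frac_lt_1)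
  moreover have "x - frac x \<in> \<rat>" by (simp add: frac_def)
  ultimately have "frac x \<in> {0..<1} \<and> x - frac x \<in> \<rat>" by blast
  then show ?thesis unfolding vrep_def by (rule someI)
qed

lemma vit_sub: "vit \<subseteq> {0..<1}"
  using vrep_prop unfolding vit_def by auto

lemma vit_uniq:
  assumes "u \<in> vit" "v \<in> vit" "u - v \<in> \<rat>" shows "u = v"
proof -
  obtain x y where u: "u = vrep x" and v: "v = vrep y" using assms unfolding vit_def by auto
  have xu: "x - u \<in> \<rat>" and yv: "y - v \<in> \<rat>" using vrep_prop u v by auto
  have "(x - u) + (u - v) - (y - v) \<in> \<rat>" using Rats_diff[OF Rats_add[OF xu assms(3)] yv] .
  hence xy: "x - y \<in> \<rat>" by simp
  have "(\<lambda>z. z \<in> {0..<1} \<and> x - z \<in> \<rat>) = (\<lambda>z. z \<in> {0..<1} \<and> y - z \<in> \<rat>)"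
  proof (rule ext)
    fix z
    have "x - z \<in> \<rat> \<longleftrightarrow> y - z \<in> \<rat>"
    proof
      assume "x - z \<in> \<rat>"
      hence "(x - z) - (x - y) \<in> \<rat>" using Rats_diff[OF _ xy] by blast
      then show "y - z \<in> \<rat>" by simp
    next
      assume "y - z \<in> \<rat>"
      hence "(x - y) + (y - z) \<in> \<rat>" using Rats_add[OF xy] by blast
      then show "x - z \<in> \<rat>" by simp
    qed
    then show "(z \<in> {0..<1} \<and> x - z \<in> \<rat>) = (z \<in> {0..<1} \<and> y - z \<in> \<rat>)" by simp
  qed
  then show ?thesis unfolding u v vrep_def by simp
qed

lemma vit_cover: "x - vrep x \<in> \<rat> \<and> vrep x \<in> vit"
  using vrep_prop unfolding vit_def by auto

lemma haar_sub_vit: assumes "K \<subseteq> vit" shows "haar K = 0"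
proof (cases "K \<in> sets lebesgue")
  case False
  then show ?thesis unfolding haar_def by (simp add: measure_notin_sets)
next
  case True
  have "K \<subseteq> {0..1}" using vit_sub assms by auto
  hence "bounded K" by (rule bounded_subset[OF bounded_closed_interval])
  hence Kl: "K \<in> lmeasurable"
    using True by (intro bounded_set_imp_lmeasurable)
  have bound: "measure lebesgue K \<le> 2 / real N" if "N > 0" for N :: nat
  proof -
    define T where "T i = (+) (1 / real (Suc i)) ` K" for i
    have Tl: "T i \<in> lmeasurable" for i unfolding T_def using Kl by (rule measurable_translation)
    have Tm: "measure lebesgue (T i) = measure lebesgue K" for i
      unfolding T_def by (rule measure_translation)
    have disj: "disjoint_family_on T {..<N}"
      unfolding disjoint_family_on_def
    proof (intro ballI impI)
      fix i j assume "i \<in> {..<N}" "j \<in> {..<N}" "i \<noteq> j"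
      show "T i \<inter> T j = {}"
      proof (rule ccontr)
        assume "T i \<inter> T j \<noteq> {}"
        then obtain a b where ab: "a \<in> K" "b \<in> K" "1 / real (Suc i) + a = 1 / real (Suc j) + b"
          unfolding T_def by auto
        have "a - b = 1 / real (Suc j) - 1 / real (Suc i)" using ab(3) by simp
        hence "a - b \<in> \<rat>" by simp
        hence "a = b" using vit_uniq ab assms by auto
        hence "1 / real (Suc i) = 1 / real (Suc j)" using ab(3) by simp
        hence "i = j" by (simp add: field_simps)
        then show False using \<open>i \<noteq> j\<close> by simp
      qed
    qed
    have "measure lebesgue (\<Union>i\<in>{..<N}. T i) = (\<Sum>i<N. measure lebesgue (T i))"
    proof (rule measure_finite_Union)
      show "finite {..<N}" by simp
      show "T ` {..<N} \<subseteq> sets lebesgue" using fmeasurableD[OF Tl] by blast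
      show "disjoint_family_on T {..<N}" by (rule disj)
      show "emeasure lebesgue (T i) \<noteq> \<infinity>" for i using fmeasurableD2[OF Tl] by simp
    qed
    also have "\<dots> = real N * measure lebesgue K" using Tm by simp
    finally have eq: "measure lebesgue (\<Union>i\<in>{..<N}. T i) = real N * measure lebesgue K" .
    have sub: "(\<Union>i\<in>{..<N}. T i) \<subseteq> {0..2}"
    proof
      fix x assume "x \<in> (\<Union>i\<in>{..<N}. T i)"
      then obtain i a where "a \<in> K" "x = 1 / real (Suc i) + a" unfolding T_def by auto
      moreover have "0 \<le> a" "a < 1" using \<open>a \<in> K\<close> assms vit_sub by auto
      moreover have "1 / real (Suc i) \<le> 1" "0 \<le> 1 / real (Suc i)" by (auto simp: field_simps)
      ultimately have "0 \<le> x \<and> x \<le> 2" by linarith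
      then show "x \<in> {0..2}" by simp
    qed
    have "measure lebesgue (\<Union>i\<in>{..<N}. T i) \<le> measure lebesgue {0..2::real}"
      by (rule measure_mono_fmeasurable[OF sub]) (use Tl in auto)
    also have "\<dots> = 2" by simp
    finally have "real N * measure lebesgue K \<le> 2" using eq by simp
    then show ?thesis using that by (simp add: field_simps)
  qed
  have "measure lebesgue K \<le> 0"
  proof (rule field_le_epsilon)
    fix e :: real assume "e > 0"
    obtain N :: nat where N: "N > 2 / e" using reals_Archimedean2 by blast
    hence "N > 0" using \<open>e > 0\<close> by (metis divide_pos_pos of_nat_0_less_iff order.strict_trans zero_less_numeral)
    have "2 / real N < e" using N \<open>e > 0\<close> \<open>N > 0\<close> by (simp add: field_simps)
    then show "measure lebesgue K \<le> 0 + e" using bound[OF \<open>N > 0\<close>] by simp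
  qed
  then show ?thesis unfolding haar_def using measure_nonneg[of lebesgue K] by linarith
qed

lemma inner_vit: "inner_haar vit = 0"
proof -
  define S where "S = {haar K | K. K \<subseteq> vit \<and> torus_compact K}"
  have tc: "torus_compact {}" unfolding torus_compact_def by (intro exI[of _ "{}"]) auto
  have s1: "S \<subseteq> {0}" unfolding S_def using haar_sub_vit by blast
  have "haar {} \<in> S" unfolding S_def using tc by blast
  moreover have "haar {} = 0" unfolding haar_def by simp
  ultimately have s2: "0 \<in> S" by simp
  have "S = {0}" using s1 s2 by (intro equalityI) auto
  then show ?thesis unfolding inner_haar_def S_def[symmetric] by simp
qed

lemma outer_vit: "outer_haar vit > 0"
proof (rule ccontr)
  define S where "S = {haar U | U. haar_measurable U \<and> vit \<subseteq> U}"
  assume "\<not> outer_haar vit > 0"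
  hence inf: "Inf S \<le> 0" unfolding outer_haar_def S_def by simp
  have "haar_measurable torus \<and> vit \<subseteq> torus"
    unfolding haar_measurable_def torus_def using vit_sub by simp
  hence "haar torus \<in> S" unfolding S_def by blast
  hence ne: "S \<noteq> {}" by blast
  have bdd: "bdd_below S" unfolding S_def haar_def by (intro bdd_belowI[of _ 0]) auto
  have "\<forall>k::nat. \<exists>U. haar_measurable U \<and> vit \<subseteq> U \<and> haar U < 1 / real (Suc k)"
  proof
    fix k :: nat
    have "Inf S < 1 / real (Suc k)" using inf by (smt (verit) divide_pos_pos of_nat_0_less_iff zero_less_Suc)
    then obtain s where "s \<in> S" "s < 1 / real (Suc k)" using cInf_lessD[OF ne] by blast
    then show "\<exists>U. haar_measurable U \<and> vit \<subseteq> U \<and> haar U < 1 / real (Suc k)"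
      unfolding S_def by auto
  qed
  from choice[OF this] obtain U where U0: "\<forall>k. haar_measurable (U k) \<and> vit \<subseteq> U k \<and> haar (U k) < 1 / real (Suc k)"
    by blast
  hence U: "\<And>k. haar_measurable (U k) \<and> vit \<subseteq> U k \<and> haar (U k) < 1 / real (Suc k)" by blast
  define W where "W = (\<Inter>k. U k)"
  have Ul: "U k \<in> lmeasurable" for k
  proof -
    have "U k \<subseteq> {0..1}" using U[of k] unfolding haar_measurable_def torus_def by auto
    hence "bounded (U k)" by (rule bounded_subset[OF bounded_closed_interval])
    then show ?thesis using U[of k] unfolding haar_measurable_def by (intro bounded_set_imp_lmeasurable) auto
  qed
  have Wm: "W \<in> sets lebesgue" unfolding W_def using Ul by auto
  have Wle: "measure lebesgue W \<le> 1 / real (Suc k)" for k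
  proof -
    have "measure lebesgue W \<le> measure lebesgue (U k)"
      by (rule measure_mono_fmeasurable) (use Wm Ul in \<open>auto simp: W_def\<close>)
    then show ?thesis using U[of k] unfolding haar_def by simp
  qed
  have "measure lebesgue W \<le> 0"
  proof (rule field_le_epsilon)
    fix e :: real assume "e > 0"
    obtain N :: nat where N: "N > 1 / e" using reals_Archimedean2 by blast
    have "1 / real (Suc N) < e" using N \<open>e > 0\<close> by (simp add: field_simps)
    then show "measure lebesgue W \<le> 0 + e" using Wle[of N] by simp
  qed
  hence "measure lebesgue W = 0" using measure_nonneg[of lebesgue W] by linarith
  moreover have "W \<in> lmeasurable" using Wm Ul
    by (intro fmeasurableI2[OF Ul[of 0]]) (auto simp: W_def)
  ultimately have Wn: "W \<in> null_sets lebesgue"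
  proof -
    assume m0: "measure lebesgue W = 0" and Wl: "W \<in> lmeasurable"
    have "emeasure lebesgue W = ennreal (measure lebesgue W)"
      using fmeasurableD2[OF Wl] by (rule emeasure_eq_ennreal_measure)
    then show ?thesis using m0 Wm by (intro null_setsI) auto
  qed
  have vW: "vit \<subseteq> W" unfolding W_def using U by auto
  have tn: "(+) q ` W \<in> null_sets lebesgue" for q :: real
    using Wn negligible_translation by (simp add: negligible_iff_null_sets[symmetric])
  have "(\<Union>q\<in>\<rat>. (+) q ` W) \<in> null_sets lebesgue"
    by (rule null_sets_UN') (auto simp: countable_rat tn)
  moreover have "{0..<1::real} \<subseteq> (\<Union>q\<in>\<rat>. (+) q ` W)"
  proof
    fix x :: real assume "x \<in> {0..<1}"
    have "x = (x - vrep x) + vrep x" by simp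
    then show "x \<in> (\<Union>q\<in>\<rat>. (+) q ` W)" using vit_cover[of x] vW by blast
  qed
  moreover have "{0..<1::real} \<in> sets lebesgue" by simp
  ultimately have "{0..<1::real} \<in> null_sets lebesgue" by (metis null_sets_subset)
  hence "measure lebesgue {0..<1::real} = 0" by (rule measure_eq_0_null_sets)
  then show False by simp
qed

lemma tsum_torus: assumes "A \<noteq> {}" shows "tsum A torus = torus"
proof
  show "tsum A torus \<subseteq> torus" unfolding tsum_def torus_def by (auto simp: frac_lt_1)
  show "torus \<subseteq> tsum A torus"
  proof
    fix x assume x: "x \<in> torus"
    obtain a where a: "a \<in> A" using assms by auto
    have "frac (a + frac (x - a)) = frac x"
      by (metis add.commute diff_add_cancel frac_add_of_int_right frac_def
          diff_eq_eq add_diff_eq)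
    hence "x = frac (a + frac (x - a))" using x unfolding torus_def by simp
    moreover have "frac (x - a) \<in> torus" unfolding torus_def by (auto simp: frac_lt_1)
    ultimately show "x \<in> tsum A torus" unfolding tsum_def using a by blast
  qed
qed

lemma tdiff_torus: assumes "m > 0" shows "tdiffset m n torus = torus"
proof
  show "tdiffset m n torus \<subseteq> torus" unfolding tdiffset_def torus_def by (auto simp: frac_lt_1)
  show "torus \<subseteq> tdiffset m n torus"
  proof
    fix x assume x: "x \<in> torus"
    define b where "b i = (if i = 0 then x else 0)" for i :: nat
    have "(\<Sum>i<m. b i) = x" unfolding b_def using assms by (simp add: sum.delta)
    hence "x = frac ((\<Sum>i<m. b i) - (\<Sum>j<n. (\<lambda>_. 0::real) j))" using x unfolding torus_def by simp
    moreover have "\<forall>i<m. b i \<in> torus" "\<forall>j<n. (\<lambda>_. 0::real) j \<in> torus"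
      using x unfolding b_def torus_def by auto
    ultimately show "x \<in> tdiffset m n torus" unfolding tdiffset_def by blast
  qed
qed

theorem proposition5p5:
  shows "\<exists>A B (\<alpha>::real). A \<subseteq> torus \<and> B \<subseteq> torus \<and> \<alpha> > 0 \<and>
     haar_measurable (tsum A B) \<and> 0 < haar (tsum A B) \<and>
     haar (tsum A B) \<le> \<alpha> * outer_haar A \<and>
     (\<forall>m n::nat. m > 0 \<longrightarrow> n > 0 \<longrightarrow>
        haar_measurable (tdiffset m n B) \<and>
        haar (tdiffset m n B) > \<alpha> ^ (m + n) * inner_haar A)"
proof (intro exI conjI allI impI)
  have ne: "vit \<noteq> {}" unfolding vit_def by simp
  have ht: "haar torus = 1" unfolding haar_def torus_def by simp
  have hm: "haar_measurable torus" unfolding haar_measurable_def torus_def by simp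
  show "vit \<subseteq> torus" using vit_sub unfolding torus_def .
  show "torus \<subseteq> torus" by simp
  show "1 / outer_haar vit > 0" using outer_vit by simp
  show "haar_measurable (tsum vit torus)" using tsum_torus[OF ne] hm by simp
  show "0 < haar (tsum vit torus)" using tsum_torus[OF ne] ht by simp
  show "haar (tsum vit torus) \<le> 1 / outer_haar vit * outer_haar vit"
    using tsum_torus[OF ne] ht outer_vit by simp
  fix m n :: nat assume "m > 0" "n > 0"
  show "haar_measurable (tdiffset m n torus)" using tdiff_torus[OF \<open>m > 0\<close>] hm by simp
  show "haar (tdiffset m n torus) > (1 / outer_haar vit) ^ (m + n) * inner_haar vit"
    using tdiff_torus[OF \<open>m > 0\<close>] ht inner_vit by simp
qed

end
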